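(* Let $q$ be a prime power, $k\ge1$, and let $U$ be a $k\times m$ matrix over $\mathbb{F}_q$ whose columns form a maximal set of nonzero vectors of $\mathbb{F}_q^k$ no one of which is a scalar multiple of another. Then, up to isomorphism, $\mathfrak{g}_k(\mathbb{F}_q)$ is exactly the set of looped graphs $\Gamma(U^tBU)$ for $B\in\mathcal{B}$, where: (1) if $k$ is odd, $\mathcal{B}=\{I_k\}$; (2) if $k$ is even and $q$ is even, $\mathcal{B}=\{I_k,\operatorname{diag}(H,H,\dots,H)\}$ with $k/2$ copies of $H=\begin{bmatrix}0&1\\1&0\end{bmatrix}$; (3) if $k$ is even and $q$ is odd, $\mathcal{B}=\{I_k,\operatorname{diag}(I_{k-1},\nu)\}$ where $\nu$ is any nonsquare in $\mathbb{F}_q$.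
   Context: For a symmetric $n\times n$ matrix $A$, the looped graph corresponding to $A$, $\Gamma(A)$, has vertex set $\{1,\dots,n\}$, an edge $ij$ ($i\neq j$) iff $a_{ij}\neq0$, and a loop at $i$ iff $a_{ii}\ne 0$. Definition of $\mathfrak{g}_k(\mathbb{F}_q)$: let $x_1,\dots,x_m$ be representatives of the classes of nonzero vectors of $\mathbb{F}_q^k$ under the relation $x\sim cx$ ($c\in\mathbb{F}_q$, $c\neq0$), and let $U=[x_1\ \cdots\ x_m]$; $\mathfrak{g}_k(\mathbb{F}_q)$ is the set of isomorphism classes of looped graphs $\Gamma(U^tBU)$ as $B$ ranges over the invertible symmetric $k\times k$ matrices over $\mathbb{F}_q$. *)

theory Defs
  imports "Jordan_Normal_Form.Matrix"
begin

text \<open>A looped graph on vertex set {0..<n}: a pair (n, R) with R the adjacency relation;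
  R i i means a loop at i. Only the values of R on {0..<n} matter.\<close>
type_synonym lgraph = "nat \<times> (nat \<Rightarrow> nat \<Rightarrow> bool)"

definition looped_graph :: "'a::zero mat \<Rightarrow> lgraph" where
  "looped_graph A = (dim_row A, (\<lambda>i j. A $$ (i, j) \<noteq> 0))"

definition lgraph_iso :: "lgraph \<Rightarrow> lgraph \<Rightarrow> bool" where
  "lgraph_iso G H \<longleftrightarrow> fst G = fst H \<and>
     (\<exists>\<sigma>. bij_betw \<sigma> {..<fst G} {..<fst H} \<and>
          (\<forall>i<fst G. \<forall>j<fst G. snd G i j \<longleftrightarrow> snd H (\<sigma> i) (\<sigma> j)))"

text \<open>The isomorphism classes of a set of looped graphs (as their union, i.e. iso-closure).\<close>
definition iso_closure :: "lgraph set \<Rightarrow> lgraph set" where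
  "iso_closure S = {G. \<exists>H\<in>S. lgraph_iso G H}"

definition proj_rep_matrix :: "nat \<Rightarrow> nat \<Rightarrow> 'a::field mat \<Rightarrow> bool" where
  "proj_rep_matrix k m U \<longleftrightarrow> U \<in> carrier_mat k m \<and>
     (\<forall>j<m. col U j \<noteq> 0\<^sub>v k) \<and>
     (\<forall>i<m. \<forall>j<m. i \<noteq> j \<longrightarrow> \<not> (\<exists>c. col U i = c \<cdot>\<^sub>v col U j)) \<and>
     (\<forall>v\<in>carrier_vec k. v \<noteq> 0\<^sub>v k \<longrightarrow> (\<exists>j<m. \<exists>c. v = c \<cdot>\<^sub>v col U j))"

definition graphs_of :: "'a::field mat \<Rightarrow> 'a mat set \<Rightarrow> lgraph set" where
  "graphs_of U Bs = (\<lambda>B. looped_graph (transpose_mat U * B * U)) ` Bs"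

definition inv_sym_mats :: "nat \<Rightarrow> 'a::field mat set" where
  "inv_sym_mats k = {B. B \<in> carrier_mat k k \<and> transpose_mat B = B \<and> invertible_mat B}"

text \<open>g_k(F_q), as a set of isomorphism classes (represented by their union), for the
  chosen representative matrix U.\<close>
definition frak_g :: "nat \<Rightarrow> 'a::field mat \<Rightarrow> lgraph set" where
  "frak_g k U = iso_closure (graphs_of U (inv_sym_mats k))"

text \<open>diag(H,...,H) with k/2 copies of H = [[0,1],[1,0]].\<close>
definition diagH :: "nat \<Rightarrow> 'a::{zero,one} mat" where
  "diagH k = mat k k (\<lambda>(i, j). if i \<noteq> j \<and> i div 2 = j div 2 then 1 else 0)"

definition diag_nu :: "nat \<Rightarrow> 'a::{zero,one} \<Rightarrow> 'a mat" where
  "diag_nu k \<nu> = mat k k (\<lambda>(i, j). if i = j then (if i = k - 1 then \<nu> else 1) else 0)"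

end

theory Submission
  imports Defs "Jordan_Normal_Form.Determinant"
begin


lemma inv_det:
  assumes A: "(A::'a::field mat) \<in> carrier_mat n n"
  shows "invertible_mat A \<longleftrightarrow> det A \<noteq> 0"
proof
  assume "invertible_mat A"
  then obtain C where AC: "A * C = 1\<^sub>m n" and CA: "C * A = 1\<^sub>m (dim_row C)"
    using A unfolding invertible_mat_def inverts_mat_def by auto
  have "dim_col C = n" using AC A by (metis index_mult_mat(3) index_one_mat(3))
  moreover have "dim_row C = n" using CA A by (metis index_mult_mat(3) index_one_mat(3) carrier_matD(2))
  ultimately have C: "C \<in> carrier_mat n n" by auto
  from det_mult[OF A C] AC show "det A \<noteq> 0" by auto
next
  assume "det A \<noteq> 0"
  from det_non_zero_imp_unit[OF A this, of "()"] obtain C where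
    C: "C \<in> carrier_mat n n" and "A * C = 1\<^sub>m n" "C * A = 1\<^sub>m n"
    unfolding Units_def by (auto simp: ring_mat_def)
  thus "invertible_mat A" using A C unfolding invertible_mat_def inverts_mat_def square_mat.simps
    by auto
qed

lemma det_kernel:
  assumes A: "(A::'a::field mat) \<in> carrier_mat n n" and "det A \<noteq> 0"
    and x: "x \<in> carrier_vec n" and "A *\<^sub>v x = 0\<^sub>v n"
  shows "x = 0\<^sub>v n"
  using det_0_iff_vec_prod_zero_field[OF A] assms by auto

lemma kernel_exists:
  assumes A: "(A::'a::field mat) \<in> carrier_mat n m" and nm: "n < m"
  shows "\<exists>x\<in>carrier_vec m. x \<noteq> 0\<^sub>v m \<and> A *\<^sub>v x = 0\<^sub>v n"
proof -
  define c where "c = (\<lambda>i. if i < n then row A i else 0\<^sub>v m)"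
  define A' where "A' = mat\<^sub>r m m (\<lambda>i. if i = m - 1 then 0\<^sub>v m else c i)"
  have A'c: "A' \<in> carrier_mat m m" unfolding A'_def by auto
  have "det A' = 0" unfolding A'_def
    by (rule det_row_0, insert nm A, auto simp: c_def)
  then obtain x where x: "x \<in> carrier_vec m" "x \<noteq> 0\<^sub>v m" "A' *\<^sub>v x = 0\<^sub>v m"
    using det_0_iff_vec_prod_zero_field[OF A'c] by auto
  have "A *\<^sub>v x = 0\<^sub>v n"
  proof (rule eq_vecI)
    fix i assume "i < dim_vec (0\<^sub>v n :: 'a vec)"
    hence i: "i < n" by auto
    have "(A' *\<^sub>v x) $ i = 0" using x(3) i nm by auto
    moreover have "row A' i = row A i" using i nm A unfolding A'_def c_def
      by (auto simp: row_mat_of_row_fun)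
    ultimately show "(A *\<^sub>v x) $ i = 0\<^sub>v n $ i" using i A A'c nm by auto
  qed (insert A, auto)
  thus ?thesis using x by auto
qed


lemma det_inverse:
  assumes A: "(A::'a::field mat) \<in> carrier_mat n n" and "det A \<noteq> 0"
  shows "\<exists>H\<in>carrier_mat n n. A * H = 1\<^sub>m n \<and> H * A = 1\<^sub>m n"
proof -
  from det_non_zero_imp_unit[OF assms, of "()"] show ?thesis
    unfolding Units_def by (auto simp: ring_mat_def)
qed

locale sf =
  fixes k :: nat and B :: "'a::{finite,field} mat"
  assumes B: "B \<in> carrier_mat k k" and symB: "transpose_mat B = B" and detB: "det B \<noteq> 0"
begin

lemma mat_vec_zero[simp]: "A \<in> carrier_mat n m \<Longrightarrow> A *\<^sub>v 0\<^sub>v m = 0\<^sub>v n"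
  by (intro eq_vecI, auto)

definition bf :: "'a vec \<Rightarrow> 'a vec \<Rightarrow> 'a" where "bf x y = x \<bullet> (B *\<^sub>v y)"

lemma Bv[simp]: "y \<in> carrier_vec k \<Longrightarrow> B *\<^sub>v y \<in> carrier_vec k"
  using B by auto

lemma bf_sym: "x \<in> carrier_vec k \<Longrightarrow> y \<in> carrier_vec k \<Longrightarrow> bf x y = bf y x"
  unfolding bf_def
proof -
  assume x: "x \<in> carrier_vec k" and y: "y \<in> carrier_vec k"
  have "y \<bullet> (B *\<^sub>v x) = (transpose_mat B *\<^sub>v y) \<bullet> x"
    using transpose_vec_mult_scalar[OF B x y] by simp
  also have "\<dots> = x \<bullet> (B *\<^sub>v y)" unfolding symB by (rule comm_scalar_prod[OF _ x], insert y, auto)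
  finally show "x \<bullet> (B *\<^sub>v y) = y \<bullet> (B *\<^sub>v x)" by simp
qed

lemma bf_add_left: "x \<in> carrier_vec k \<Longrightarrow> y \<in> carrier_vec k \<Longrightarrow> z \<in> carrier_vec k \<Longrightarrow>
   bf (x + y) z = bf x z + bf y z"
  unfolding bf_def by (rule add_scalar_prod_distrib, auto)

lemma bf_add_right: "x \<in> carrier_vec k \<Longrightarrow> y \<in> carrier_vec k \<Longrightarrow> z \<in> carrier_vec k \<Longrightarrow>
   bf x (y + z) = bf x y + bf x z"
  unfolding bf_def using B by (simp add: mult_add_distrib_mat_vec[OF B] scalar_prod_add_distrib[of _ k])

lemma bf_smult_left: "x \<in> carrier_vec k \<Longrightarrow> z \<in> carrier_vec k \<Longrightarrow>
   bf (a \<cdot>\<^sub>v x) z = a * bf x z"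
  unfolding bf_def by (rule smult_scalar_prod_distrib, auto)

lemma bf_smult_right: "x \<in> carrier_vec k \<Longrightarrow> z \<in> carrier_vec k \<Longrightarrow>
   bf x (a \<cdot>\<^sub>v z) = a * bf x z"
  unfolding bf_def using B by (simp add: mult_mat_vec[OF B])

lemma bf_minus_left: "x \<in> carrier_vec k \<Longrightarrow> y \<in> carrier_vec k \<Longrightarrow> z \<in> carrier_vec k \<Longrightarrow>
   bf (x - y) z = bf x z - bf y z"
  unfolding bf_def by (rule minus_scalar_prod_distrib, auto)

lemma bf_minus_right: "x \<in> carrier_vec k \<Longrightarrow> y \<in> carrier_vec k \<Longrightarrow> z \<in> carrier_vec k \<Longrightarrow>
   bf x (y - z) = bf x y - bf x z"
  unfolding bf_def using B by (simp add: mult_minus_distrib_mat_vec[OF B] scalar_prod_minus_distrib[of _ k])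

lemma bf_unit_left: "i < k \<Longrightarrow> y \<in> carrier_vec k \<Longrightarrow> bf (unit_vec k i) y = (B *\<^sub>v y) $ i"
  unfolding bf_def by (rule scalar_prod_left_unit, auto)

lemmas bf_simps = bf_add_left bf_add_right bf_smult_left bf_smult_right bf_minus_left bf_minus_right

definition gram :: "'a vec list \<Rightarrow> 'a mat" where
  "gram vs = mat (length vs) (length vs) (\<lambda>(i,j). bf (vs ! i) (vs ! j))"

lemma Pt_entry: assumes "set vs \<subseteq> carrier_vec k" "i < length vs"
  shows "(transpose_mat (mat_of_cols k vs) *\<^sub>v u) $ i = vs ! i \<bullet> u"
proof -
  have "vs ! i \<in> carrier_vec k" using assms nth_mem by blast
  thus ?thesis using assms by (auto simp: row_transpose)
qed

lemma triple_assoc: assumes P: "P \<in> carrier_mat k r" and c: "c \<in> carrier_vec r"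
  shows "(transpose_mat P * B * P) *\<^sub>v c = transpose_mat P *\<^sub>v (B *\<^sub>v (P *\<^sub>v c))"
proof -
  have PB: "transpose_mat P * B \<in> carrier_mat r k" using P B by auto
  have "(transpose_mat P * B * P) *\<^sub>v c = (transpose_mat P * B) *\<^sub>v (P *\<^sub>v c)"
    by (rule assoc_mult_mat_vec[OF PB P c])
  also have "\<dots> = transpose_mat P *\<^sub>v (B *\<^sub>v (P *\<^sub>v c))"
    by (rule assoc_mult_mat_vec, insert P B c, auto)
  finally show ?thesis .
qed

lemma gram_eq: assumes vs: "set vs \<subseteq> carrier_vec k"
  shows "transpose_mat (mat_of_cols k vs) * B * mat_of_cols k vs = gram vs"
proof -
  let ?P = "mat_of_cols k vs"
  have P: "?P \<in> carrier_mat k (length vs)" by simp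
  have "transpose_mat ?P * B * ?P = transpose_mat ?P * (B * ?P)"
    using P B by (intro assoc_mult_mat, auto)
  also have "\<dots> = gram vs"
  proof (rule eq_matI)
    fix i j assume i: "i < dim_row (gram vs)" and j: "j < dim_col (gram vs)"
    hence i: "i < length vs" and j: "j < length vs" unfolding gram_def by auto
    have vi: "vs ! i \<in> carrier_vec k" "vs ! j \<in> carrier_vec k" using vs i j by auto
    have "(transpose_mat ?P * (B * ?P)) $$ (i,j) = row (transpose_mat ?P) i \<bullet> col (B * ?P) j"
      using i j B by auto
    also have "\<dots> = vs ! i \<bullet> (B *\<^sub>v vs ! j)"
      using i j B vi by (simp add: col_mult2[OF B P j])
    finally show "(transpose_mat ?P * (B * ?P)) $$ (i,j) = gram vs $$ (i,j)"
      unfolding gram_def bf_def using i j by simp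
  qed (auto simp: gram_def B)
  finally show ?thesis .
qed

lemma gram_carrier[simp]: "gram vs \<in> carrier_mat (length vs) (length vs)"
  unfolding gram_def by auto

lemma count_bound:
  assumes vs: "set vs \<subseteq> carrier_vec k" and d: "det (gram vs) \<noteq> 0"
  shows "length vs \<le> k"
proof (rule ccontr)
  assume "\<not> length vs \<le> k"
  hence lt: "k < length vs" by auto
  let ?P = "mat_of_cols k vs" let ?r = "length vs"
  have P: "?P \<in> carrier_mat k ?r" by simp
  obtain c where c: "c \<in> carrier_vec ?r" "c \<noteq> 0\<^sub>v ?r" "?P *\<^sub>v c = 0\<^sub>v k"
    using kernel_exists[OF P lt] by auto
  have "gram vs *\<^sub>v c = (transpose_mat ?P * B * ?P) *\<^sub>v c" using gram_eq[OF vs] by simp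
  also have "\<dots> = transpose_mat ?P *\<^sub>v (B *\<^sub>v (?P *\<^sub>v c))"
    by (rule triple_assoc[OF P c(1)])
  also have "\<dots> = 0\<^sub>v ?r" using c(3) B by simp
  finally have "c = 0\<^sub>v ?r" using det_kernel[OF gram_carrier d c(1)] by simp
  with c(2) show False by simp
qed

definition orth :: "'a vec list \<Rightarrow> 'a vec \<Rightarrow> bool" where
  "orth vs y \<longleftrightarrow> (\<forall>v\<in>set vs. bf v y = 0)"

lemma orth_iff: assumes vs: "set vs \<subseteq> carrier_vec k" and y: "y \<in> carrier_vec k"
  shows "orth vs y \<longleftrightarrow> transpose_mat (mat_of_cols k vs) *\<^sub>v (B *\<^sub>v y) = 0\<^sub>v (length vs)"
proof
  assume o: "orth vs y"
  show "transpose_mat (mat_of_cols k vs) *\<^sub>v (B *\<^sub>v y) = 0\<^sub>v (length vs)"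
  proof (rule eq_vecI)
    fix i assume "i < dim_vec (0\<^sub>v (length vs) :: 'a vec)"
    hence i: "i < length vs" by simp
    have "vs ! i \<in> set vs" using i by simp
    thus "(transpose_mat (mat_of_cols k vs) *\<^sub>v (B *\<^sub>v y)) $ i = 0\<^sub>v (length vs) $ i"
      using o i Pt_entry[OF vs i] unfolding orth_def bf_def by simp
  qed simp
next
  assume z: "transpose_mat (mat_of_cols k vs) *\<^sub>v (B *\<^sub>v y) = 0\<^sub>v (length vs)"
  show "orth vs y" unfolding orth_def
  proof
    fix v assume "v \<in> set vs"
    then obtain i where i: "i < length vs" "v = vs ! i" by (auto simp: in_set_conv_nth)
    from arg_cong[OF z, of "\<lambda>u. u $ i"] Pt_entry[OF vs i(1)] i show "bf v y = 0"
      unfolding bf_def by simp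
  qed
qed

lemma ext_lemma:
  assumes vs: "set vs \<subseteq> carrier_vec k" and d: "det (gram vs) \<noteq> 0" and lt: "length vs < k"
  shows "\<exists>y\<in>carrier_vec k. \<exists>z\<in>carrier_vec k. orth vs y \<and> orth vs z \<and> bf z y \<noteq> 0"
proof -
  let ?P = "mat_of_cols k vs" let ?r = "length vs"
  have P: "?P \<in> carrier_mat k ?r" by simp
  have PB: "transpose_mat ?P * B \<in> carrier_mat ?r k" using B by auto
  have Pt: "transpose_mat ?P \<in> carrier_mat ?r k" by simp
  obtain y where y: "y \<in> carrier_vec k" "y \<noteq> 0\<^sub>v k" "(transpose_mat ?P * B) *\<^sub>v y = 0\<^sub>v ?r"
    using kernel_exists[OF PB lt] by auto
  have "(transpose_mat ?P * B) *\<^sub>v y = transpose_mat ?P *\<^sub>v (B *\<^sub>v y)"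
    by (rule assoc_mult_mat_vec, insert P B y, auto)
  hence Py0: "transpose_mat ?P *\<^sub>v (B *\<^sub>v y) = 0\<^sub>v ?r" using y(3) by simp
  hence oy: "orth vs y" using orth_iff[OF vs y(1)] by simp
  have "B *\<^sub>v y \<noteq> 0\<^sub>v k" using det_kernel[OF B detB y(1)] y(2) by auto
  then obtain i where i: "i < k" "(B *\<^sub>v y) $ i \<noteq> 0" using B by (auto simp: vec_eq_iff)
  define x where "x = (unit_vec k i :: 'a vec)"
  have x: "x \<in> carrier_vec k" unfolding x_def by simp
  have bxy: "bf x y \<noteq> 0" unfolding x_def using bf_unit_left[OF i(1) y(1)] i by simp
  obtain H where H: "H \<in> carrier_mat ?r ?r" "gram vs * H = 1\<^sub>m ?r"
    using det_inverse[OF gram_carrier d] by blast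
  define w where "w = transpose_mat ?P *\<^sub>v (B *\<^sub>v x)"
  have w: "w \<in> carrier_vec ?r" unfolding w_def
    by (rule mult_mat_vec_carrier[of _ _ k], insert B x, auto)
  define z where "z = x - ?P *\<^sub>v (H *\<^sub>v w)"
  have Hw: "H *\<^sub>v w \<in> carrier_vec ?r" by (rule mult_mat_vec_carrier[OF H(1) w])
  have PHw: "?P *\<^sub>v (H *\<^sub>v w) \<in> carrier_vec k" by (rule mult_mat_vec_carrier[OF P Hw])
  have z: "z \<in> carrier_vec k" unfolding z_def using x PHw by auto
  have "transpose_mat ?P *\<^sub>v (B *\<^sub>v z) = transpose_mat ?P *\<^sub>v (B *\<^sub>v x - B *\<^sub>v (?P *\<^sub>v (H *\<^sub>v w)))"
    unfolding z_def using B x PHw by (simp add: mult_minus_distrib_mat_vec[OF B])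
  also have "\<dots> = transpose_mat ?P *\<^sub>v (B *\<^sub>v x) - transpose_mat ?P *\<^sub>v (B *\<^sub>v (?P *\<^sub>v (H *\<^sub>v w)))"
    by (rule mult_minus_distrib_mat_vec[OF Pt mult_mat_vec_carrier[OF B x]
        mult_mat_vec_carrier[OF B PHw]])
  also have "transpose_mat ?P *\<^sub>v (B *\<^sub>v x) = w" by (simp add: w_def)
  also have "transpose_mat ?P *\<^sub>v (B *\<^sub>v (?P *\<^sub>v (H *\<^sub>v w))) = (transpose_mat ?P * B * ?P) *\<^sub>v (H *\<^sub>v w)"
    using triple_assoc[OF P Hw] by simp
  also have "\<dots> = (gram vs * H) *\<^sub>v w" unfolding gram_eq[OF vs]
    by (rule assoc_mult_mat_vec[OF gram_carrier H(1) w, symmetric])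
  also have "\<dots> = w" unfolding H(2) by (rule one_mult_mat_vec[OF w])
  also have "w - w = 0\<^sub>v ?r" by (intro eq_vecI, insert w, auto)
  finally have "transpose_mat ?P *\<^sub>v (B *\<^sub>v z) = 0\<^sub>v ?r" .
  hence oz: "orth vs z" using orth_iff[OF vs z] by simp
  have "bf z y = bf x y - bf (?P *\<^sub>v (H *\<^sub>v w)) y"
    unfolding z_def by (rule bf_minus_left[OF x PHw y(1)])
  also have "bf (?P *\<^sub>v (H *\<^sub>v w)) y = (H *\<^sub>v w) \<bullet> (transpose_mat ?P *\<^sub>v (B *\<^sub>v y))"
    unfolding bf_def using transpose_vec_mult_scalar[of "transpose_mat ?P" ?r k "B *\<^sub>v y" "H *\<^sub>v w"] Hw y B
    by auto
  also have "\<dots> = 0" unfolding Py0 by (rule scalar_prod_right_zero[OF Hw])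
  finally have "bf z y \<noteq> 0" using bxy by simp
  thus ?thesis using y(1) z oy oz by blast
qed

end



lemma even_card_involution:
  assumes "finite S" and "\<forall>x\<in>S. f x \<in> S" and "\<forall>x\<in>S. f (f x) = x" and "\<forall>x\<in>S. f x \<noteq> x"
  shows "even (card S)"
  using assms
proof (induction S rule: finite_psubset_induct)
  case (psubset S)
  show ?case
  proof (cases "S = {}")
    case True thus ?thesis by simp
  next
    case False
    then obtain x where x: "x \<in> S" by auto
    let ?S' = "S - {x, f x}"
    have fx: "f x \<in> S" "f x \<noteq> x" using psubset.prems x by auto
    have sub: "?S' \<subset> S" using x by auto
    have "even (card ?S')"
    proof (rule psubset.IH[OF sub])
      show "\<forall>y\<in>?S'. f y \<in> ?S'"
      proof
        fix y assume y: "y \<in> ?S'"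
        have "f y \<in> S" using y psubset.prems by auto
        moreover have "f y \<noteq> x" using y psubset.prems x by (metis DiffD1 DiffD2 insertCI)
        moreover have "f y \<noteq> f x" using y psubset.prems x by (metis DiffD1 DiffD2 insertCI)
        ultimately show "f y \<in> ?S'" by auto
      qed
    qed (use psubset.prems in auto)
    moreover have "card S = card ?S' + 2"
    proof -
      have "card S = card ?S' + card {x, f x}"
        using card_Diff_subset[of "{x, f x}" S] psubset.hyps x fx
        by (metis card_mono add.commute empty_subsetI finite_Diff insert_subset le_add_diff_inverse2 finite.insertI finite.emptyI)
      thus ?thesis using fx by simp
    qed
    ultimately show ?thesis by simp
  qed
qed

context
  fixes dummy :: "'a::{finite,field}"
begin

lemma char2_of_even:
  assumes "even (card (UNIV :: 'a set))" shows "(1::'a) + 1 = 0"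
proof (rule ccontr)
  assume ne: "(1::'a) + 1 \<noteq> 0"
  let ?S = "UNIV - {0::'a}"
  have "even (card ?S)"
  proof (rule even_card_involution[where f = uminus])
    show "\<forall>x\<in>?S. - x \<noteq> x"
    proof
      fix x :: 'a assume x: "x \<in> ?S"
      show "- x \<noteq> x"
      proof
        assume "- x = x"
        hence "(1 + 1) * x = 0" by (simp add: algebra_simps)
        thus False using ne x by simp
      qed
    qed
  qed auto
  moreover have "card ?S = card (UNIV :: 'a set) - 1" by (simp add: card_Diff_singleton)
  moreover have "card (UNIV :: 'a set) \<ge> 1" using finite_UNIV_card_ge_0[where 'a='a] by simp
  ultimately show False using assms by (metis One_nat_def Suc_pred' even_Suc not_le not_less_eq_eq)
qed

lemma char_ne2_of_odd:
  assumes "odd (card (UNIV :: 'a set))" shows "(1::'a) + 1 \<noteq> 0"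
proof
  assume e: "(1::'a) + 1 = 0"
  have "even (card (UNIV :: 'a set))"
  proof (rule even_card_involution[where f = "\<lambda>x. x + 1"])
    show "\<forall>x\<in>UNIV. x + 1 + 1 = (x::'a)" using e by (simp add: add.assoc)
  qed auto
  with assms show False by simp
qed


definition sqs :: "'a set" where "sqs = range (\<lambda>x::'a. x * x)"

lemma sq_fiber_le2:
  assumes ne: "(1::'a) + 1 \<noteq> 0" and y: "y \<in> sqs"
  shows "card {x::'a. x * x = y} \<le> 2"
proof -
  obtain x0 where x0: "y = x0 * x0" using y unfolding sqs_def by auto
  have "{x::'a. x * x = y} \<subseteq> {x0, - x0}"
  proof
    fix z assume "z \<in> {x::'a. x * x = y}"
    hence "z * z = x0 * x0" using x0 by simp
    hence "(z - x0) * (z + x0) = 0" by (simp add: algebra_simps)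
    hence "z = x0 \<or> z = - x0" by (auto simp: eq_neg_iff_add_eq_0)
    thus "z \<in> {x0, - x0}" by auto
  qed
  hence "card {x::'a. x * x = y} \<le> card {x0, - x0}" by (intro card_mono, auto)
  also have "\<dots> \<le> 2" by (simp add: card_insert_le_m1)
  finally show ?thesis .
qed

lemma card_sqs:
  assumes ne: "(1::'a) + 1 \<noteq> 0"
  shows "card (UNIV :: 'a set) + 1 \<le> 2 * card (sqs :: 'a set)"
proof -
  let ?I = "sqs - {0::'a}"
  have "UNIV - {0::'a} \<subseteq> (\<Union>y\<in>?I. {x. x * x = y})" unfolding sqs_def by auto
  hence "card (UNIV - {0::'a}) \<le> card (\<Union>y\<in>?I. {x. x * x = y})" by (intro card_mono, auto)
  also have "\<dots> \<le> (\<Sum>y\<in>?I. card {x. x * x = y})" by (rule card_UN_le, auto)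
  also have "\<dots> \<le> (\<Sum>y\<in>?I. 2)" by (rule sum_mono, rule sq_fiber_le2[OF ne], auto)
  also have "\<dots> = 2 * card ?I" by simp
  finally have "card (UNIV :: 'a set) - 1 \<le> 2 * (card (sqs :: 'a set) - 1)"
    by (simp add: card_Diff_singleton sqs_def)
  moreover have "card (sqs :: 'a set) \<ge> 1"
    by (metis One_nat_def Suc_leI card_gt_0_iff empty_iff finite sqs_def rangeI)
  moreover have "card (UNIV :: 'a set) \<ge> 1" using finite_UNIV_card_ge_0[where 'a='a] by simp
  ultimately show ?thesis by linarith
qed

lemma card_scaled_sqs:
  assumes "(p::'a) \<noteq> 0"
  shows "card ((\<lambda>y. a + p * y) ` sqs) = card (sqs :: 'a set)"
  by (rule card_image, rule inj_onI, insert assms, auto)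

lemma two_squares:
  assumes ne: "(1::'a) + 1 \<noteq> 0" and p: "(p::'a) \<noteq> 0" and r: "r \<noteq> 0"
  shows "\<exists>s t. p * (s * s) + r * (t * t) = a"
proof (rule ccontr)
  assume nex: "\<not> ?thesis"
  let ?A = "(\<lambda>y. 0 + p * y) ` sqs" and ?B = "(\<lambda>y. a + (- r) * y) ` sqs"
  have disj: "?A \<inter> ?B = {}"
  proof (rule ccontr)
    assume "?A \<inter> ?B \<noteq> {}"
    then obtain s t where "p * (s * s) = a + (- r) * (t * t)" unfolding sqs_def by auto
    hence "p * (s * s) + r * (t * t) = a" by (simp add: algebra_simps)
    with nex show False by auto
  qed
  have "card (?A \<union> ?B) = card ?A + card ?B" using disj by (intro card_Un_disjoint, auto)
  also have "\<dots> = 2 * card (sqs :: 'a set)"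
  proof -
    have c1: "card ?A = card (sqs :: 'a set)" by (rule card_scaled_sqs[OF p])
    have c2: "card ?B = card (sqs :: 'a set)" by (rule card_scaled_sqs, simp add: r)
    show ?thesis unfolding c1 c2 by simp
  qed
  finally have "card (?A \<union> ?B) > card (UNIV :: 'a set)" using card_sqs[OF ne] by simp
  moreover have "card (?A \<union> ?B) \<le> card (UNIV :: 'a set)" by (intro card_mono, auto)
  ultimately show False by simp
qed

lemma nonsquare_class:
  assumes ne: "(1::'a) + 1 \<noteq> 0" and d: "\<not> (\<exists>x. (d::'a) = x * x)" and nu: "\<not> (\<exists>x. (\<nu>::'a) = x * x)"
  shows "\<exists>t. \<nu> = d * (t * t)"
proof -
  have d0: "d \<noteq> 0" using d by auto
  let ?A = "(\<lambda>y. 0 + d * y) ` sqs"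
  have int: "sqs \<inter> ?A \<subseteq> {0}"
  proof
    fix z assume "z \<in> sqs \<inter> ?A"
    hence z1: "z \<in> sqs" and z2: "z \<in> ?A" by auto
    from z1 obtain s where s: "z = s * s" unfolding sqs_def by auto
    from z2 obtain t where t: "z = d * (t * t)" unfolding sqs_def by auto
    note st = s t
    show "z \<in> {0}"
    proof (cases "t = 0")
      case True thus ?thesis using st by simp
    next
      case False
      hence "d = (s / t) * (s / t)" using st by (simp add: field_simps)
      with d have False by blast
      thus ?thesis ..
    qed
  qed
  have "card (sqs \<union> ?A) + card (sqs \<inter> ?A) = card sqs + card ?A"
    by (metis card_Un_Int finite)
  moreover have "card (sqs \<inter> ?A) \<le> 1" using card_mono[OF _ int] by simp
  moreover have "card ?A = card (sqs :: 'a set)" using card_scaled_sqs[OF d0] .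
  ultimately have "card (sqs \<union> ?A) \<ge> card (UNIV :: 'a set)" using card_sqs[OF ne] by linarith
  hence "sqs \<union> ?A = UNIV" by (metis card_seteq finite subset_UNIV)
  hence "\<nu> \<in> ?A" using nu unfolding sqs_def by auto
  thus ?thesis unfolding sqs_def by auto
qed

lemma char2_all_squares:
  assumes e: "(1::'a) + 1 = 0" shows "\<exists>s. (a::'a) = s * s"
proof -
  have "inj (\<lambda>x::'a. x * x)"
  proof (rule injI)
    fix x y :: 'a assume "x * x = y * y"
    have "(x - y) * (x - y) = x * x + y * y - (1 + 1) * x * y" by (simp add: algebra_simps)
    also have "\<dots> = (1 + 1) * (y * y)" using \<open>x * x = y * y\<close> e by (simp add: algebra_simps)
    also have "\<dots> = 0" using e by simp
    finally show "x = y" by simp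
  qed
  hence "surj (\<lambda>x::'a. x * x)" by (rule finite_UNIV_inj_surj[OF finite_UNIV])
  hence "a \<in> range (\<lambda>x::'a. x * x)" by simp
  thus ?thesis by auto
qed

end





lemma det_diag: "det (mat r r (\<lambda>(i,j). if i = j then f i else 0)) = (\<Prod>i=0..<r. (f i :: 'a::comm_ring_1))"
proof -
  have "det (mat r r (\<lambda>(i,j). if i = j then f i else 0)) = prod_list (diag_mat (mat r r (\<lambda>(i,j). if i = j then f i else 0)))"
    by (rule det_upper_triangular, auto simp: upper_triangular_def)
  also have "\<dots> = (\<Prod>i=0..<r. f i)" unfolding prod_list_diag_prod by simp
  finally show ?thesis .
qed

lemma prod_last: assumes "k \<ge> 1"
  shows "(\<Prod>i=0..<k. (if i = k - 1 then x else a)) = a ^ (k - 1) * (x :: 'a::comm_ring_1)"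
proof -
  obtain m where k: "k = Suc m" using assms by (cases k, auto)
  have "(\<Prod>i=0..<m. (if i = m then x else a)) = (\<Prod>i=0..<m. a)" by (rule prod.cong, auto)
  thus ?thesis unfolding k by simp
qed

context sf begin

definition gr :: "'a vec list \<Rightarrow> (nat \<Rightarrow> nat \<Rightarrow> 'a) \<Rightarrow> bool" where
  "gr vs f \<longleftrightarrow> (\<forall>i<length vs. \<forall>j<length vs. bf (vs ! i) (vs ! j) = f i j)"

lemma gram_mat: "gr vs f \<Longrightarrow> gram vs = mat (length vs) (length vs) (\<lambda>(i,j). f i j)"
  unfolding gram_def gr_def by (intro eq_matI, auto)

lemma det_gram_diag: "gr vs (\<lambda>i j. if i = j then f i else 0) \<Longrightarrow> det (gram vs) = (\<Prod>i=0..<length vs. f i)"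
  using gram_mat[of vs "\<lambda>i j. if i = j then f i else 0"] det_diag[of "length vs" f] by simp

lemma append_bf:
  assumes vs: "set vs \<subseteq> carrier_vec k" and ws: "set ws \<subseteq> carrier_vec k"
    and o: "\<forall>a\<in>set vs. \<forall>b\<in>set ws. bf a b = 0"
    and i: "i < length vs + length ws" and j: "j < length vs + length ws"
  shows "bf ((vs @ ws) ! i) ((vs @ ws) ! j) =
    (if i < length vs \<and> j < length vs then bf (vs ! i) (vs ! j)
     else if length vs \<le> i \<and> length vs \<le> j then bf (ws ! (i - length vs)) (ws ! (j - length vs))
     else 0)"
proof -
  consider "i < length vs" "j < length vs" | "length vs \<le> i" "length vs \<le> j"
    | "i < length vs" "length vs \<le> j" | "length vs \<le> i" "j < length vs" by linarith
  thus ?thesis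
  proof cases
    case 1 thus ?thesis by (simp add: nth_append)
  next
    case 2 thus ?thesis by (simp add: nth_append)
  next
    case 3
    have "ws ! (j - length vs) \<in> set ws" using 3 j by simp
    moreover have "vs ! i \<in> set vs" using 3 by simp
    ultimately show ?thesis using 3 o by (simp add: nth_append)
  next
    case 4
    have a: "ws ! (i - length vs) \<in> set ws" using 4 i by simp
    moreover have b: "vs ! j \<in> set vs" using 4 by simp
    ultimately have "bf (vs ! j) (ws ! (i - length vs)) = 0" using o by simp
    hence "bf (ws ! (i - length vs)) (vs ! j) = 0" using bf_sym[OF subsetD[OF ws a] subsetD[OF vs b]] by simp
    thus ?thesis using 4 by (simp add: nth_append)
  qed
qed

lemma orth_lin:
  assumes vs: "set vs \<subseteq> carrier_vec k" and x: "x \<in> carrier_vec k" and y: "y \<in> carrier_vec k"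
    and ox: "orth vs x" and oy: "orth vs y"
  shows "orth vs (s \<cdot>\<^sub>v x + t \<cdot>\<^sub>v y)"
  unfolding orth_def
proof
  fix v assume v: "v \<in> set vs"
  hence vc: "v \<in> carrier_vec k" using vs by auto
  have "bf v (s \<cdot>\<^sub>v x + t \<cdot>\<^sub>v y) = s * bf v x + t * bf v y"
    using vc x y by (simp add: bf_add_right bf_smult_right)
  thus "bf v (s \<cdot>\<^sub>v x + t \<cdot>\<^sub>v y) = 0" using ox oy v unfolding orth_def by simp
qed

lemma orth_smult:
  assumes vs: "set vs \<subseteq> carrier_vec k" and x: "x \<in> carrier_vec k" and ox: "orth vs x"
  shows "orth vs (s \<cdot>\<^sub>v x)"
  using ox vs x unfolding orth_def by (auto simp: bf_smult_right subsetD)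

lemma nonzero_Q:
  assumes ne: "(1::'a) + 1 \<noteq> 0" and vs: "set vs \<subseteq> carrier_vec k"
    and y: "y \<in> carrier_vec k" and z: "z \<in> carrier_vec k"
    and oy: "orth vs y" and oz: "orth vs z" and zy: "bf z y \<noteq> 0"
  shows "\<exists>u\<in>carrier_vec k. orth vs u \<and> bf u u \<noteq> 0"
proof (cases "bf y y \<noteq> 0 \<or> bf z z \<noteq> 0")
  case True thus ?thesis using y z oy oz by auto
next
  case False
  have "orth vs (1 \<cdot>\<^sub>v y + 1 \<cdot>\<^sub>v z)" by (rule orth_lin[OF vs y z oy oz])
  hence o: "orth vs (y + z)" by simp
  have "bf (y + z) (y + z) = bf y y + bf y z + (bf z y + bf z z)"
    using y z by (simp add: bf_add_left bf_add_right)
  also have "\<dots> = (1 + 1) * bf z y" using False bf_sym[OF y z] by (simp add: algebra_simps)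
  finally have "bf (y + z) (y + z) \<noteq> 0" using ne zy by simp
  thus ?thesis using o y z by auto
qed

lemma aniso_exists:
  assumes ne: "(1::'a) + 1 \<noteq> 0" and vs: "set vs \<subseteq> carrier_vec k"
    and d: "det (gram vs) \<noteq> 0" and lt: "length vs < k"
  shows "\<exists>u\<in>carrier_vec k. orth vs u \<and> bf u u \<noteq> 0"
proof -
  obtain y z where "y \<in> carrier_vec k" "z \<in> carrier_vec k" "orth vs y" "orth vs z" "bf z y \<noteq> 0"
    using ext_lemma[OF vs d lt] by auto
  thus ?thesis using nonzero_Q[OF ne vs] by blast
qed

lemma gr_append1:
  assumes vs: "set vs \<subseteq> carrier_vec k" and v: "v \<in> carrier_vec k" and o: "orth vs v"
    and g: "gr vs (\<lambda>i j. if i = j then f i else 0)"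
  shows "gr (vs @ [v]) (\<lambda>i j. if i = j then (if i = length vs then bf v v else f i) else 0)"
  unfolding gr_def
proof (intro allI impI)
  fix i j assume i: "i < length (vs @ [v])" and j: "j < length (vs @ [v])"
  have o': "\<forall>a\<in>set vs. \<forall>b\<in>set [v]. bf a b = 0" using o unfolding orth_def by simp
  show "bf ((vs @ [v]) ! i) ((vs @ [v]) ! j) = (if i = j then (if i = length vs then bf v v else f i) else 0)"
    using append_bf[OF vs _ o', of i j] i j v g unfolding gr_def by auto
qed

lemma bf_lin2:
  assumes u: "u \<in> carrier_vec k" and w: "w \<in> carrier_vec k"
  shows "bf (s \<cdot>\<^sub>v u + t \<cdot>\<^sub>v w) (s \<cdot>\<^sub>v u + t \<cdot>\<^sub>v w) =
     s * s * bf u u + s * t * bf u w + t * s * bf w u + t * t * bf w w"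
  using u w by (simp add: bf_add_left bf_add_right bf_smult_left bf_smult_right algebra_simps)

lemma cn2_step:
  assumes ne: "(1::'a) + 1 \<noteq> 0" and a: "a \<noteq> 0" and vs: "set vs \<subseteq> carrier_vec k"
    and g: "gr vs (\<lambda>i j. if i = j then a else 0)" and len: "length vs + 2 \<le> k"
  shows "\<exists>v\<in>carrier_vec k. orth vs v \<and> bf v v = a"
proof -
  have "det (gram vs) = (\<Prod>i=0..<length vs. a)" using det_gram_diag[of vs "\<lambda>_. a"] g by simp
  hence d: "det (gram vs) \<noteq> 0" using a by simp
  obtain u where u: "u \<in> carrier_vec k" "orth vs u" "bf u u \<noteq> 0"
    using aniso_exists[OF ne vs d] len by auto
  let ?vs = "vs @ [u]"
  have vs': "set ?vs \<subseteq> carrier_vec k" using vs u by auto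
  have g': "gr ?vs (\<lambda>i j. if i = j then (if i = length vs then bf u u else a) else 0)"
    using gr_append1[OF vs u(1) u(2), of "\<lambda>_. a"] g by simp
  have "det (gram ?vs) = (\<Prod>i=0..<length ?vs. (if i = length vs then bf u u else a))"
    using det_gram_diag[OF g'] .
  hence d': "det (gram ?vs) \<noteq> 0" using a u(3) by (simp add: prod_zero_iff)
  obtain w where w: "w \<in> carrier_vec k" "orth ?vs w" "bf w w \<noteq> 0"
    using aniso_exists[OF ne vs' d'] len by auto
  have ow: "orth vs w" using w(2) unfolding orth_def by simp
  have uw: "bf u w = 0" using w(2) unfolding orth_def by simp
  have wu: "bf w u = 0" using uw bf_sym[OF u(1) w(1)] by simp
  obtain s t where st: "bf u u * (s * s) + bf w w * (t * t) = a"
    using two_squares[OF ne u(3) w(3), of a] by blast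
  let ?v = "s \<cdot>\<^sub>v u + t \<cdot>\<^sub>v w"
  have "bf ?v ?v = a" unfolding bf_lin2[OF u(1) w(1)] uw wu using st by (simp add: algebra_simps)
  moreover have "orth vs ?v" by (rule orth_lin[OF vs u(1) w(1) u(2) ow])
  moreover have "?v \<in> carrier_vec k" using u w by simp
  ultimately show ?thesis by blast
qed

lemma cn2_build:
  assumes ne: "(1::'a) + 1 \<noteq> 0" and a: "a \<noteq> 0"
  shows "n + 1 \<le> k \<Longrightarrow> \<exists>vs. length vs = n \<and> set vs \<subseteq> carrier_vec k \<and> gr vs (\<lambda>i j. if i = j then a else 0)"
proof (induction n)
  case 0 thus ?case by (intro exI[of _ "[]"], auto simp: gr_def)
next
  case (Suc n)
  then obtain vs where vs: "length vs = n" "set vs \<subseteq> carrier_vec k" "gr vs (\<lambda>i j. if i = j then a else 0)"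
    by auto
  obtain v where v: "v \<in> carrier_vec k" "orth vs v" "bf v v = a"
    using cn2_step[OF ne a vs(2) vs(3)] Suc.prems vs(1) by auto
  have "gr (vs @ [v]) (\<lambda>i j. if i = j then (if i = length vs then bf v v else a) else 0)"
    using gr_append1[OF vs(2) v(1) v(2), of "\<lambda>_. a"] vs(3) by simp
  hence "gr (vs @ [v]) (\<lambda>i j. if i = j then a else 0)" using v(3) by (simp add: gr_def)
  thus ?case using vs v by (intro exI[of _ "vs @ [v]"], auto)
qed


definition realize :: "'a mat \<Rightarrow> bool" where
  "realize C \<longleftrightarrow> (\<exists>vs c. length vs = k \<and> set vs \<subseteq> carrier_vec k \<and> c \<noteq> 0 \<and> gr vs (\<lambda>i j. c * C $$ (i,j)))"

lemma det_gram_P: assumes vs: "set vs \<subseteq> carrier_vec k" and len: "length vs = k"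
  shows "det (gram vs) = det (mat_of_cols k vs) * det (mat_of_cols k vs) * det B"
proof -
  let ?P = "mat_of_cols k vs"
  have P: "?P \<in> carrier_mat k k" using len by (metis mat_of_cols_carrier(1))
  have Pt: "transpose_mat ?P \<in> carrier_mat k k" using P by (metis transpose_carrier_mat)
  have PtB: "transpose_mat ?P * B \<in> carrier_mat k k" using mult_carrier_mat[OF Pt B] .
  have "det (gram vs) = det (transpose_mat ?P * B * ?P)" using gram_eq[OF vs] by simp
  also have "\<dots> = det (transpose_mat ?P * B) * det ?P" by (rule det_mult[OF PtB P])
  also have "det (transpose_mat ?P * B) = det (transpose_mat ?P) * det B" by (rule det_mult[OF Pt B])
  also have "det (transpose_mat ?P) = det ?P" by (rule det_transpose[OF P])
  finally show ?thesis by (simp add: ac_simps)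
qed

lemma cn2_full:
  assumes ne: "(1::'a) + 1 \<noteq> 0" and a: "a \<noteq> 0" and k1: "k \<ge> 1"
  shows "\<exists>vs v. length vs = k - 1 \<and> set vs \<subseteq> carrier_vec k \<and> gr vs (\<lambda>i j. if i = j then a else 0)
     \<and> v \<in> carrier_vec k \<and> orth vs v \<and> bf v v \<noteq> 0"
proof -
  obtain vs where vs: "length vs = k - 1" "set vs \<subseteq> carrier_vec k" "gr vs (\<lambda>i j. if i = j then a else 0)"
    using cn2_build[OF ne a, of "k - 1"] k1 by auto
  have "det (gram vs) = (\<Prod>i=0..<length vs. a)" using det_gram_diag[of vs "\<lambda>_. a"] vs(3) by simp
  hence d: "det (gram vs) \<noteq> 0" using a by simp
  obtain u where "u \<in> carrier_vec k" "orth vs u" "bf u u \<noteq> 0"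
    using aniso_exists[OF ne vs(2) d] vs(1) k1 by auto
  thus ?thesis using vs by blast
qed

lemma scale_vec:
  assumes vs: "set vs \<subseteq> carrier_vec k" and v: "v \<in> carrier_vec k" and o: "orth vs v"
  shows "t \<cdot>\<^sub>v v \<in> carrier_vec k" "orth vs (t \<cdot>\<^sub>v v)" "bf (t \<cdot>\<^sub>v v) (t \<cdot>\<^sub>v v) = t * t * bf v v"
  using v orth_smult[OF vs v o] by (auto simp: bf_smult_left bf_smult_right)

lemma realize_from:
  assumes vs: "length vs = k - 1" "set vs \<subseteq> carrier_vec k" "gr vs (\<lambda>i j. if i = j then a else 0)"
    and v: "v \<in> carrier_vec k" "orth vs v" "bf v v = b" and k1: "k \<ge> 1"
    and c: "c \<noteq> 0"
    and C: "\<And>i j. i < k \<Longrightarrow> j < k \<Longrightarrow> c * C $$ (i,j) = (if i = j then (if i = k - 1 then b else a) else 0)"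
  shows "realize C"
proof -
  have g: "gr (vs @ [v]) (\<lambda>i j. if i = j then (if i = length vs then bf v v else a) else 0)"
    using gr_append1[OF vs(2) v(1) v(2), of "\<lambda>_. a"] vs(3) by simp
  have "gr (vs @ [v]) (\<lambda>i j. c * C $$ (i,j))"
    unfolding gr_def
  proof (intro allI impI)
    fix i j assume i: "i < length (vs @ [v])" and j: "j < length (vs @ [v])"
    hence i': "i < k" and j': "j < k" using vs(1) k1 by auto
    show "bf ((vs @ [v]) ! i) ((vs @ [v]) ! j) = c * C $$ (i,j)"
      using g i j unfolding gr_def C[OF i' j'] using vs(1) v(3) by auto
  qed
  moreover have "length (vs @ [v]) = k" using vs(1) k1 by auto
  moreover have "set (vs @ [v]) \<subseteq> carrier_vec k" using vs(2) v(1) by auto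
  ultimately show ?thesis unfolding realize_def using c by blast
qed

lemma cn2_classify:
  assumes ne: "(1::'a) + 1 \<noteq> 0" and k1: "k \<ge> 1"
  shows "(odd k \<longrightarrow> realize (1\<^sub>m k)) \<and>
    (\<forall>\<nu>. even k \<and> \<not> (\<exists>x. \<nu> = x * x) \<longrightarrow> realize (1\<^sub>m k) \<or> realize (diag_nu k \<nu>))"
proof -
  obtain vs1 v1 where A: "length vs1 = k - 1" "set vs1 \<subseteq> carrier_vec k"
    "gr vs1 (\<lambda>i j. if i = j then 1 else 0)" "v1 \<in> carrier_vec k" "orth vs1 v1" "bf v1 v1 \<noteq> 0"
    using cn2_full[OF ne _ k1, of 1] by auto
  define d where "d = bf v1 v1"
  have d0: "d \<noteq> 0" using A(6) d_def by simp
  have sq: "realize (1\<^sub>m k)" if sqd: "\<exists>t. d = t * t"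
  proof -
    obtain t where t: "d = t * t" using sqd by blast
    have t0: "t \<noteq> 0" using t d0 by auto
    note sv = scale_vec[OF A(2) A(4) A(5), of "1 / t"]
    have "bf ((1 / t) \<cdot>\<^sub>v v1) ((1 / t) \<cdot>\<^sub>v v1) = 1" using sv(3) t t0 d_def by (simp add: field_simps)
    show ?thesis
      by (rule realize_from[OF A(1-3) sv(1,2) \<open>bf ((1 / t) \<cdot>\<^sub>v v1) ((1 / t) \<cdot>\<^sub>v v1) = 1\<close> k1, of 1],
          auto)
  qed
  have nseven: "realize (diag_nu k \<nu>)" if ns: "\<not> (\<exists>t. d = t * t)" and nu: "\<not> (\<exists>x. \<nu> = x * x)" for \<nu>
  proof -
    obtain t where t: "\<nu> = d * (t * t)" using nonsquare_class[OF ne ns nu] by auto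
    note sv = scale_vec[OF A(2) A(4) A(5), of t]
    have "bf (t \<cdot>\<^sub>v v1) (t \<cdot>\<^sub>v v1) = \<nu>" using sv(3) t d_def by (simp add: ac_simps)
    show ?thesis
      by (rule realize_from[OF A(1-3) sv(1,2) \<open>bf (t \<cdot>\<^sub>v v1) (t \<cdot>\<^sub>v v1) = \<nu>\<close> k1, of 1],
          auto simp: diag_nu_def)
  qed
  have nsodd: "realize (1\<^sub>m k)" if ns: "\<not> (\<exists>t. d = t * t)" and odd: "odd k"
  proof -
    obtain vs2 v2 where A2: "length vs2 = k - 1" "set vs2 \<subseteq> carrier_vec k"
      "gr vs2 (\<lambda>i j. if i = j then d else 0)" "v2 \<in> carrier_vec k" "orth vs2 v2" "bf v2 v2 \<noteq> 0"
      using cn2_full[OF ne d0 k1] by auto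
    define d2 where "d2 = bf v2 v2"
    have g1: "gr (vs1 @ [v1]) (\<lambda>i j. if i = j then (if i = k - 1 then d else 1) else 0)"
      using gr_append1[OF A(2) A(4) A(5), of "\<lambda>_. 1"] A(3) unfolding A(1) d_def by simp
    have g2: "gr (vs2 @ [v2]) (\<lambda>i j. if i = j then (if i = k - 1 then d2 else d) else 0)"
      using gr_append1[OF A2(2) A2(4) A2(5), of "\<lambda>_. d"] A2(3) unfolding A2(1) d2_def by simp
    have l1: "length (vs1 @ [v1]) = k" using A(1) k1 by simp
    have l2: "length (vs2 @ [v2]) = k" using A2(1) k1 by simp
    have c1: "set (vs1 @ [v1]) \<subseteq> carrier_vec k" using A(2,4) by auto
    have c2: "set (vs2 @ [v2]) \<subseteq> carrier_vec k" using A2(2,4) by auto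
    have D1: "det (gram (vs1 @ [v1])) = d"
    proof -
      have "det (gram (vs1 @ [v1])) = (\<Prod>i=0..<k. (if i = k - 1 then d else 1))"
        using det_gram_diag[OF g1] unfolding l1 .
      also have "\<dots> = 1 ^ (k - 1) * d" by (rule prod_last[OF k1])
      finally show ?thesis by simp
    qed
    have D2: "det (gram (vs2 @ [v2])) = d ^ (k - 1) * d2"
    proof -
      have "det (gram (vs2 @ [v2])) = (\<Prod>i=0..<k. (if i = k - 1 then d2 else d))"
        using det_gram_diag[OF g2] unfolding l2 .
      also have "\<dots> = d ^ (k - 1) * d2" by (rule prod_last[OF k1])
      finally show ?thesis .
    qed
    define p1 where "p1 = det (mat_of_cols k (vs1 @ [v1]))"
    define p2 where "p2 = det (mat_of_cols k (vs2 @ [v2]))"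
    have E1: "d = p1 * p1 * det B" using det_gram_P[OF c1 l1] D1 p1_def by simp
    have E2: "d ^ (k - 1) * d2 = p2 * p2 * det B" using det_gram_P[OF c2 l2] D2 p2_def by simp
    define e where "e = d ^ ((k - 1) div 2)"
    have ee: "e * e = d ^ (k - 1)"
    proof -
      have "(k - 1) div 2 + (k - 1) div 2 = k - 1" using odd k1 by presburger
      thus ?thesis unfolding e_def by (metis power_add)
    qed
    have p10: "p1 \<noteq> 0" using E1 d0 by auto
    have e0: "e \<noteq> 0" unfolding e_def using d0 by simp
    have d20: "d2 \<noteq> 0" using A2(6) d2_def by simp
    define t where "t = p2 / (p1 * e)"
    have "d2 * (e * e) * (p1 * p1) = d * (p2 * p2)"
      using E1 E2 ee by (metis mult.assoc mult.commute)
    hence tt: "d2 = d * (t * t)" unfolding t_def using p10 e0 by (simp add: field_simps)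
    have t0: "t \<noteq> 0" using tt d20 by auto
    note sv = scale_vec[OF A2(2) A2(4) A2(5), of "1 / t"]
    have "bf ((1 / t) \<cdot>\<^sub>v v2) ((1 / t) \<cdot>\<^sub>v v2) = d" using sv(3) tt t0 d2_def by (simp add: field_simps)
    show ?thesis
      by (rule realize_from[OF A2(1-3) sv(1,2) \<open>bf ((1 / t) \<cdot>\<^sub>v v2) ((1 / t) \<cdot>\<^sub>v v2) = d\<close> k1 d0],
          auto)
  qed
  show ?thesis using sq nseven nsodd by blast
qed

end



lemma div2_eq_iff: "((l::nat) div 2 = a) = (l = 2 * a \<or> l = Suc (2 * a))" by presburger

lemma partner_iff: "(i \<noteq> l \<and> i div 2 = l div 2) = (l = (if even i then Suc i else i - 1))" for i l :: nat
proof (cases "even i")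
  case True
  then obtain a where a: "i = 2 * a" by (auto elim: evenE)
  thus ?thesis using True div2_eq_iff[of l a] by auto
next
  case False
  then obtain a where a: "i = Suc (2 * a)" by (auto elim: oddE)
  thus ?thesis using False div2_eq_iff[of l a] by auto
qed

lemma partner_lt: "(j < r) \<Longrightarrow> even r \<Longrightarrow> (if even j then Suc j else j - 1) < r" for j r :: nat
proof (cases "even j")
  case True
  assume jr: "j < r" and er: "even r"
  obtain a where a: "j = 2 * a" using True by (auto elim: evenE)
  obtain b where b: "r = 2 * b" using er by (auto elim: evenE)
  have "a < b" using jr a b by simp
  thus ?thesis using True a b by simp
qed auto

lemma partner_invol: "(if even (if even i then Suc i else i - 1) then Suc (if even i then Suc i else i - 1)
   else (if even i then Suc i else i - 1) - 1) = (i::nat)"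
  by (cases "even i", auto elim!: evenE oddE)

lemma det_diagH: assumes r: "even r" shows "det (diagH r :: 'a::field mat) \<noteq> 0"
proof -
  define p where "p i = (if even i then Suc i else i - 1)" for i :: nat
  have pp: "(i \<noteq> l \<and> i div 2 = l div 2) = (l = p i)" for i l unfolding p_def by (rule partner_iff)
  have ppi: "p (p i) = i" for i unfolding p_def by (rule partner_invol)
  have Hsq: "diagH r * diagH r = (1\<^sub>m r :: 'a mat)"
  proof (rule eq_matI)
    fix i j assume i: "i < dim_row (1\<^sub>m r :: 'a mat)" and j: "j < dim_col (1\<^sub>m r :: 'a mat)"
    hence i: "i < r" and j: "j < r" by auto
    have pir: "p i < r" using partner_lt[OF i r] unfolding p_def .
    have "(diagH r * diagH r :: 'a mat) $$ (i,j) = (\<Sum>l\<in>{0..<r}. (if l = p i then 1 else 0) * (diagH r :: 'a mat) $$ (l,j))"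
      using i j unfolding diagH_def by (simp add: scalar_prod_def pp)
    also have "\<dots> = (\<Sum>l\<in>{0..<r}. (if l = p i then (diagH r :: 'a mat) $$ (l,j) else 0))"
      by (rule sum.cong, auto)
    also have "\<dots> = (diagH r :: 'a mat) $$ (p i, j)" using pir by simp
    also have "\<dots> = (if p i \<noteq> j \<and> p i div 2 = j div 2 then 1 else 0)" using pir j unfolding diagH_def by simp
    also have "(p i \<noteq> j \<and> p i div 2 = j div 2) = (i = j)" using pp[of "p i" j] ppi[of i] by auto
    also have "(if i = j then 1 else 0) = (1\<^sub>m r :: 'a mat) $$ (i,j)" using i j by simp
    finally show "(diagH r * diagH r :: 'a mat) $$ (i,j) = (1\<^sub>m r :: 'a mat) $$ (i,j)" .
  qed (auto simp: diagH_def)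
  have Hc: "(diagH r :: 'a mat) \<in> carrier_mat r r" unfolding diagH_def by simp
  have "det (diagH r :: 'a mat) * det (diagH r) = 1" using det_mult[OF Hc Hc] Hsq by simp
  thus ?thesis by auto
qed

context sf begin

definition hH :: "nat \<Rightarrow> nat \<Rightarrow> 'a" where
  "hH i j = (if i \<noteq> j \<and> i div 2 = j div 2 then 1 else 0)"

lemma gram_hyp_det: assumes g: "gr vs hH" and e: "even (length vs)"
  shows "det (gram vs) \<noteq> 0"
proof -
  have "gram vs = diagH (length vs)" unfolding gram_mat[OF g] diagH_def hH_def by simp
  thus ?thesis using det_diagH[OF e] by simp
qed

lemma hyp_step:
  assumes alt: "\<forall>x\<in>carrier_vec k. bf x x = 0" and vs: "set vs \<subseteq> carrier_vec k"
    and g: "gr vs hH" and e: "even (length vs)" and lt: "length vs < k"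
  shows "\<exists>u w. u \<in> carrier_vec k \<and> w \<in> carrier_vec k \<and> gr (vs @ [u, w]) hH"
proof -
  obtain y z where yz: "y \<in> carrier_vec k" "z \<in> carrier_vec k" "orth vs y" "orth vs z" "bf z y \<noteq> 0"
    using ext_lemma[OF vs gram_hyp_det[OF g e] lt] by auto
  define w where "w = (1 / bf z y) \<cdot>\<^sub>v z"
  note sw = scale_vec[OF vs yz(2) yz(4), of "1 / bf z y"]
  have w: "w \<in> carrier_vec k" "orth vs w" using sw unfolding w_def by auto
  have yw: "bf y w = 1" unfolding w_def using bf_smult_right[OF yz(1) yz(2)] bf_sym[OF yz(1) yz(2)] yz(5)
    by simp
  have wy: "bf w y = 1" using yw bf_sym[OF yz(1) w(1)] by simp
  have yy: "bf y y = 0" and ww: "bf w w = 0" using alt yz(1) w(1) by auto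
  let ?ws = "[y, w]"
  have ws: "set ?ws \<subseteq> carrier_vec k" using yz(1) w(1) by auto
  have o: "\<forall>a\<in>set vs. \<forall>b\<in>set ?ws. bf a b = 0" using yz(3) w(2) unfolding orth_def by auto
  let ?r = "length vs"
  have "gr (vs @ ?ws) hH" unfolding gr_def
  proof (intro allI impI)
    fix i j assume i: "i < length (vs @ ?ws)" and j: "j < length (vs @ ?ws)"
    hence i': "i < ?r + length ?ws" and j': "j < ?r + length ?ws" by auto
    note ab = append_bf[OF vs ws o i' j']
    consider "i < ?r" "j < ?r" | "?r \<le> i" "?r \<le> j" | "i < ?r" "?r \<le> j" | "?r \<le> i" "j < ?r"
      by linarith
    thus "bf ((vs @ ?ws) ! i) ((vs @ ?ws) ! j) = hH i j"
    proof cases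
      case 1 thus ?thesis using ab g unfolding gr_def by simp
    next
      case 2
      have ij: "i = ?r \<or> i = Suc ?r" "j = ?r \<or> j = Suc ?r" using 2 i' j' by auto
      have sd: "Suc ?r div 2 = ?r div 2" using e by presburger
      show ?thesis using ab 2 ij yy ww yw wy sd unfolding hH_def by auto
    next
      case 3
      have "i div 2 \<noteq> j div 2" using 3 e by presburger
      thus ?thesis using ab 3 unfolding hH_def by auto
    next
      case 4
      have "i div 2 \<noteq> j div 2" using 4 e by presburger
      thus ?thesis using ab 4 unfolding hH_def by auto
    qed
  qed
  thus ?thesis using yz(1) w(1) by blast
qed

lemma hyp_build:
  assumes alt: "\<forall>x\<in>carrier_vec k. bf x x = 0"
  shows "2 * n \<le> k \<Longrightarrow> \<exists>vs. length vs = 2 * n \<and> set vs \<subseteq> carrier_vec k \<and> gr vs hH"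
proof (induction n)
  case 0 thus ?case by (intro exI[of _ "[]"], auto simp: gr_def)
next
  case (Suc n)
  then obtain vs where vs: "length vs = 2 * n" "set vs \<subseteq> carrier_vec k" "gr vs hH" by auto
  obtain u w where uw: "u \<in> carrier_vec k" "w \<in> carrier_vec k" "gr (vs @ [u, w]) hH"
    using hyp_step[OF alt vs(2) vs(3)] vs(1) Suc.prems by auto
  thus ?case using vs by (intro exI[of _ "vs @ [u, w]"], auto)
qed

lemma hyp_classify:
  assumes alt: "\<forall>x\<in>carrier_vec k. bf x x = 0"
  shows "even k \<and> realize (diagH k)"
proof -
  obtain vs where vs: "length vs = 2 * (k div 2)" "set vs \<subseteq> carrier_vec k" "gr vs hH"
    using hyp_build[OF alt, of "k div 2"] by auto
  have ev: "even k"
  proof (rule ccontr)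
    assume "odd k"
    hence lt: "length vs < k" using vs(1) by presburger
    obtain u w where uw: "u \<in> carrier_vec k" "w \<in> carrier_vec k" "gr (vs @ [u, w]) hH"
      using hyp_step[OF alt vs(2) vs(3)] vs(1) lt by auto
    have c: "set (vs @ [u, w]) \<subseteq> carrier_vec k" using vs(2) uw by auto
    have "length (vs @ [u, w]) \<le> k"
      by (rule count_bound[OF c gram_hyp_det[OF uw(3)]], insert vs(1), simp)
    with \<open>odd k\<close> vs(1) show False by simp
  qed
  have len: "length vs = k" using vs(1) ev by simp
  have "gr vs (\<lambda>i j. 1 * diagH k $$ (i,j))" using vs(3) len unfolding gr_def hH_def diagH_def by simp
  hence "realize (diagH k)" unfolding realize_def using len vs(2) by (intro exI[of _ vs] exI[of _ 1], auto)
  with ev show ?thesis by simp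
qed


lemma gr_one_det: "gr vs (\<lambda>i j. if i = j then 1 else 0) \<Longrightarrow> det (gram vs) = 1"
  using det_gram_diag[of vs "\<lambda>_. 1"] by simp

lemma gr3:
  assumes "bf a a = 1" "bf a b = 0" "bf a c = 0" "bf b a = 0" "bf b b = 1" "bf b c = 0"
    "bf c a = 0" "bf c b = 0" "bf c c = 1"
  shows "gr [a, b, c] (\<lambda>i j. if i = j then 1 else 0)"
  unfolding gr_def
proof (intro allI impI)
  fix i j assume "i < length [a, b, c]" "j < length [a, b, c]"
  hence "i = 0 \<or> i = 1 \<or> i = 2" "j = 0 \<or> j = 1 \<or> j = 2" by auto
  thus "bf ([a, b, c] ! i) ([a, b, c] ! j) = (if i = j then 1 else 0)" using assms by auto
qed

lemma c2_step:
  assumes e2: "(1::'a) + 1 = 0" and vs: "set vs \<subseteq> carrier_vec k"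
    and g: "gr vs (\<lambda>i j. if i = j then 1 else 0)" and ne: "vs \<noteq> []" and lt: "length vs < k"
  shows "\<exists>ws. length vs < length ws \<and> set ws \<subseteq> carrier_vec k \<and> gr ws (\<lambda>i j. if i = j then 1 else 0)"
proof -
  have d: "det (gram vs) \<noteq> 0" using gr_one_det[OF g] by simp
  obtain y z where yz: "y \<in> carrier_vec k" "z \<in> carrier_vec k" "orth vs y" "orth vs z" "bf z y \<noteq> 0"
    using ext_lemma[OF vs d lt] by auto
  show ?thesis
  proof (cases "\<exists>u\<in>carrier_vec k. orth vs u \<and> bf u u \<noteq> 0")
    case True
    then obtain u where u: "u \<in> carrier_vec k" "orth vs u" "bf u u \<noteq> 0" by auto
    obtain s where s: "bf u u = s * s" using char2_all_squares[OF e2] by blast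
    have s0: "s \<noteq> 0" using s u(3) by auto
    note sv = scale_vec[OF vs u(1) u(2), of "1 / s"]
    have q: "bf ((1 / s) \<cdot>\<^sub>v u) ((1 / s) \<cdot>\<^sub>v u) = 1" using sv(3) s s0 by (simp add: field_simps)
    have "gr (vs @ [(1 / s) \<cdot>\<^sub>v u]) (\<lambda>i j. if i = j then 1 else 0)"
      using gr_append1[OF vs sv(1) sv(2), of "\<lambda>_. 1"] g unfolding q by (simp add: gr_def)
    thus ?thesis using vs sv(1) by (intro exI[of _ "vs @ [(1 / s) \<cdot>\<^sub>v u]"], auto)
  next
    case False
    hence iso: "\<And>u. u \<in> carrier_vec k \<Longrightarrow> orth vs u \<Longrightarrow> bf u u = 0" by auto
    define w where "w = (1 / bf z y) \<cdot>\<^sub>v z"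
    note sw = scale_vec[OF vs yz(2) yz(4), of "1 / bf z y"]
    have w: "w \<in> carrier_vec k" "orth vs w" using sw unfolding w_def by auto
    have yw: "bf y w = 1" unfolding w_def using bf_smult_right[OF yz(1) yz(2)] bf_sym[OF yz(1) yz(2)] yz(5)
      by simp
    have wy: "bf w y = 1" using yw bf_sym[OF yz(1) w(1)] by simp
    have yy: "bf y y = 0" using iso yz(1) yz(3) by auto
    have ww: "bf w w = 0" using iso w by auto
    define pre where "pre = butlast vs"
    define e where "e = last vs"
    have vse: "vs = pre @ [e]" unfolding pre_def e_def using ne by simp
    have pre: "set pre \<subseteq> carrier_vec k" using vs unfolding pre_def by (meson in_set_butlastD subset_code(1))
    have ec: "e \<in> carrier_vec k" using vs ne unfolding e_def by auto
    have lpre: "length vs = Suc (length pre)" using vse by simp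
    have gpre: "gr pre (\<lambda>i j. if i = j then 1 else 0)" unfolding gr_def
    proof (intro allI impI)
      fix i j assume i: "i < length pre" and j: "j < length pre"
      have "bf (vs ! i) (vs ! j) = (if i = j then 1 else 0)" using g i j lpre unfolding gr_def by simp
      moreover have "vs ! i = pre ! i" "vs ! j = pre ! j" unfolding vse using i j by (auto simp: nth_append)
      ultimately show "bf (pre ! i) (pre ! j) = (if i = j then 1 else 0)" by simp
    qed
    have ee: "bf e e = 1"
    proof -
      have "bf (vs ! length pre) (vs ! length pre) = 1" using g lpre unfolding gr_def by simp
      thus ?thesis unfolding vse by simp
    qed
    have pe: "\<forall>a\<in>set pre. bf a e = 0"
    proof
      fix a assume "a \<in> set pre"
      then obtain i where i: "i < length pre" "a = pre ! i" by (auto simp: in_set_conv_nth)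
      have "bf (vs ! i) (vs ! length pre) = 0" using g lpre i(1) unfolding gr_def by simp
      thus "bf a e = 0" unfolding vse using i by (simp add: nth_append)
    qed
    have ey: "bf e y = 0" and ew: "bf e w = 0" using yz(3) w(2) unfolding orth_def vse by auto
    have ye: "bf y e = 0" using ey bf_sym[OF ec yz(1)] by simp
    have we: "bf w e = 0" using ew bf_sym[OF ec w(1)] by simp
    have py: "\<forall>a\<in>set pre. bf a y = 0" and pw: "\<forall>a\<in>set pre. bf a w = 0"
      using yz(3) w(2) unfolding orth_def vse by auto
    have two: "(2::'a) = 0" using e2 by simp
    have three: "(3::'a) = 1"
    proof -
      have "(3::'a) = 2 + 1" by simp
      thus ?thesis using two by simp
    qed
    note yc = yz(1)
    let ?a = "e + y" and ?b = "e + w" and ?c = "e + y + w"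
    have bfs: "bf ?a ?a = 1" "bf ?a ?b = 0" "bf ?a ?c = 0" "bf ?b ?a = 0" "bf ?b ?b = 1" "bf ?b ?c = 0"
      "bf ?c ?a = 0" "bf ?c ?b = 0" "bf ?c ?c = 1"
      using ec yc w(1) ee ey ew ye we yy ww yw wy e2 two three
      by (simp_all add: bf_add_left bf_add_right)
    let ?ws = "[?a, ?b, ?c]"
    have ws: "set ?ws \<subseteq> carrier_vec k" using ec yc w(1) by auto
    have o: "\<forall>a\<in>set pre. \<forall>b\<in>set ?ws. bf a b = 0"
    proof (intro ballI)
      fix a b assume a: "a \<in> set pre" and b: "b \<in> set ?ws"
      have ac: "a \<in> carrier_vec k" using a pre by auto
      have "bf a e = 0" "bf a y = 0" "bf a w = 0" using a pe py pw by auto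
      thus "bf a b = 0" using b ac ec yc w(1) by (auto simp: bf_add_right)
    qed
    have g3: "gr ?ws (\<lambda>i j. if i = j then 1 else 0)" by (rule gr3, insert bfs, auto)
    have "gr (pre @ ?ws) (\<lambda>i j. if i = j then 1 else 0)" unfolding gr_def
    proof (intro allI impI)
      fix i j assume i: "i < length (pre @ ?ws)" and j: "j < length (pre @ ?ws)"
      hence i': "i < length pre + length ?ws" and j': "j < length pre + length ?ws" by auto
      note ab = append_bf[OF pre ws o i' j']
      show "bf ((pre @ ?ws) ! i) ((pre @ ?ws) ! j) = (if i = j then 1 else 0)"
      proof (cases "i < length pre \<and> j < length pre")
        case True thus ?thesis using ab gpre unfolding gr_def by simp
      next
        case F1: False
        show ?thesis
        proof (cases "length pre \<le> i \<and> length pre \<le> j")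
          case True
          have "i - length pre < length ?ws" "j - length pre < length ?ws" using i' j' by auto
          hence "bf (?ws ! (i - length pre)) (?ws ! (j - length pre)) = (if i - length pre = j - length pre then 1 else 0)"
            using g3 unfolding gr_def by blast
          thus ?thesis using ab F1 True by auto
        next
          case False
          thus ?thesis using ab F1 by auto
        qed
      qed
    qed
    moreover have "set (pre @ ?ws) \<subseteq> carrier_vec k" using pre ws by auto
    moreover have "length vs < length (pre @ ?ws)" using lpre by simp
    ultimately show ?thesis by blast
  qed
qed

lemma c2_build:
  assumes e2: "(1::'a) + 1 = 0" and x0: "x0 \<in> carrier_vec k" "bf x0 x0 \<noteq> 0"
  shows "1 \<le> n \<Longrightarrow> n \<le> k \<Longrightarrow> \<exists>vs. n \<le> length vs \<and> set vs \<subseteq> carrier_vec k \<and> gr vs (\<lambda>i j. if i = j then 1 else 0)"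
proof (induction n)
  case 0 thus ?case by simp
next
  case (Suc n)
  show ?case
  proof (cases "n = 0")
    case True
    obtain s where s: "bf x0 x0 = s * s" using char2_all_squares[OF e2] by blast
    have s0: "s \<noteq> 0" using s x0(2) by auto
    let ?v = "(1 / s) \<cdot>\<^sub>v x0"
    have vc: "?v \<in> carrier_vec k" using x0 by simp
    have q: "bf ?v ?v = 1" using x0(1) s s0 by (simp add: bf_smult_left bf_smult_right field_simps)
    have "gr [?v] (\<lambda>i j. if i = j then 1 else 0)" unfolding gr_def using q by auto
    thus ?thesis using True vc by (intro exI[of _ "[?v]"], auto)
  next
    case False
    then obtain vs where vs: "n \<le> length vs" "set vs \<subseteq> carrier_vec k" "gr vs (\<lambda>i j. if i = j then 1 else 0)"
      using Suc by auto
    show ?thesis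
    proof (cases "Suc n \<le> length vs")
      case True thus ?thesis using vs by blast
    next
      case F: False
      hence len: "length vs = n" using vs(1) by simp
      have ne: "vs \<noteq> []" using len False by auto
      obtain ws where "length vs < length ws" "set ws \<subseteq> carrier_vec k" "gr ws (\<lambda>i j. if i = j then 1 else 0)"
        using c2_step[OF e2 vs(2) vs(3) ne] len Suc.prems by auto
      thus ?thesis using len by (intro exI[of _ ws], auto)
    qed
  qed
qed

lemma c2_classify:
  assumes e2: "(1::'a) + 1 = 0" and k1: "k \<ge> 1"
  shows "(odd k \<longrightarrow> realize (1\<^sub>m k)) \<and> (even k \<longrightarrow> realize (1\<^sub>m k) \<or> realize (diagH k))"
proof (cases "\<exists>x\<in>carrier_vec k. bf x x \<noteq> 0")
  case True
  then obtain x0 where x0: "x0 \<in> carrier_vec k" "bf x0 x0 \<noteq> 0" by auto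
  obtain vs where vs: "k \<le> length vs" "set vs \<subseteq> carrier_vec k" "gr vs (\<lambda>i j. if i = j then 1 else 0)"
    using c2_build[OF e2 x0, of k] k1 by auto
  have "length vs \<le> k" by (rule count_bound[OF vs(2)], insert gr_one_det[OF vs(3)], simp)
  hence len: "length vs = k" using vs(1) by simp
  have "gr vs (\<lambda>i j. 1 * (1\<^sub>m k) $$ (i,j))" using vs(3) len unfolding gr_def by simp
  hence "realize (1\<^sub>m k)" unfolding realize_def using len vs(2) by (intro exI[of _ vs] exI[of _ 1], auto)
  thus ?thesis by simp
next
  case False
  hence "even k \<and> realize (diagH k)" using hyp_classify by auto
  thus ?thesis by simp
qed

end



lemma smult_mat_vec: "A \<in> carrier_mat n n' \<Longrightarrow> v \<in> carrier_vec n' \<Longrightarrow> (a \<cdot>\<^sub>m A) *\<^sub>v v = a \<cdot>\<^sub>v (A *\<^sub>v (v :: 'a::comm_ring vec))"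
  by (intro eq_vecI, auto simp: scalar_prod_def sum_distrib_left ac_simps)

lemma vec_minus_zero: "a \<in> carrier_vec n \<Longrightarrow> b \<in> carrier_vec n \<Longrightarrow> a - b = 0\<^sub>v n \<Longrightarrow> a = (b :: 'a::ab_group_add vec)"
proof (intro eq_vecI)
  fix i assume a: "a \<in> carrier_vec n" and b: "b \<in> carrier_vec n" and z: "a - b = 0\<^sub>v n" and i: "i < dim_vec b"
  have "(a - b) $ i = 0" using z i b by simp
  thus "a $ i = b $ i" using a b i by simp
qed auto

lemma entry_UMU:
  assumes U: "U \<in> carrier_mat k m" and M: "M \<in> carrier_mat k k" and i: "i < m" and j: "j < m"
  shows "(transpose_mat U * M * U) $$ (i,j) = col U i \<bullet> (M *\<^sub>v col U j)"
proof -
  have Ut: "transpose_mat U \<in> carrier_mat m k" using U by simp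
  have MU: "M * U \<in> carrier_mat k m" using M U by simp
  have "transpose_mat U * M * U = transpose_mat U * (M * U)" by (rule assoc_mult_mat[OF Ut M U])
  hence "(transpose_mat U * M * U) $$ (i,j) = row (transpose_mat U) i \<bullet> col (M * U) j"
    using Ut MU i j by simp
  also have "\<dots> = col U i \<bullet> (M *\<^sub>v col U j)" using U i j col_mult2[OF M U j] by simp
  finally show ?thesis .
qed

lemma lgraph_iso_sym: "lgraph_iso G H \<Longrightarrow> lgraph_iso H G"
proof -
  assume "lgraph_iso G H"
  then obtain \<sigma> where n: "fst G = fst H" and b: "bij_betw \<sigma> {..<fst G} {..<fst H}"
    and e: "\<forall>i<fst G. \<forall>j<fst G. snd G i j \<longleftrightarrow> snd H (\<sigma> i) (\<sigma> j)"
    unfolding lgraph_iso_def by auto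
  let ?\<tau> = "inv_into {..<fst G} \<sigma>"
  have b': "bij_betw ?\<tau> {..<fst H} {..<fst G}" by (rule bij_betw_inv_into[OF b])
  have "\<forall>i<fst H. \<forall>j<fst H. snd H i j \<longleftrightarrow> snd G (?\<tau> i) (?\<tau> j)"
  proof (intro allI impI)
    fix i j assume i: "i < fst H" and j: "j < fst H"
    have ti: "?\<tau> i < fst G" "\<sigma> (?\<tau> i) = i" using b' b i
      by (auto simp: bij_betw_def f_inv_into_f)
    have tj: "?\<tau> j < fst G" "\<sigma> (?\<tau> j) = j" using b' b j
      by (auto simp: bij_betw_def f_inv_into_f)
    show "snd H i j \<longleftrightarrow> snd G (?\<tau> i) (?\<tau> j)" using e ti tj by metis
  qed
  thus "lgraph_iso H G" unfolding lgraph_iso_def using n b' by auto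
qed

lemma lgraph_iso_trans: "lgraph_iso G H \<Longrightarrow> lgraph_iso H K \<Longrightarrow> lgraph_iso G K"
proof -
  assume "lgraph_iso G H" "lgraph_iso H K"
  then obtain \<sigma> \<tau> where n: "fst G = fst H" "fst H = fst K" and b: "bij_betw \<sigma> {..<fst G} {..<fst H}"
    "bij_betw \<tau> {..<fst H} {..<fst K}"
    and e: "\<forall>i<fst G. \<forall>j<fst G. snd G i j \<longleftrightarrow> snd H (\<sigma> i) (\<sigma> j)"
    "\<forall>i<fst H. \<forall>j<fst H. snd H i j \<longleftrightarrow> snd K (\<tau> i) (\<tau> j)"
    unfolding lgraph_iso_def by auto
  have "bij_betw (\<tau> \<circ> \<sigma>) {..<fst G} {..<fst K}" by (rule bij_betw_trans[OF b])
  moreover have "\<forall>i<fst G. \<forall>j<fst G. snd G i j \<longleftrightarrow> snd K ((\<tau> \<circ> \<sigma>) i) ((\<tau> \<circ> \<sigma>) j)"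
  proof (intro allI impI)
    fix i j assume i: "i < fst G" and j: "j < fst G"
    have "\<sigma> i < fst H" "\<sigma> j < fst H" using b(1) i j by (auto simp: bij_betw_def)
    thus "snd G i j \<longleftrightarrow> snd K ((\<tau> \<circ> \<sigma>) i) ((\<tau> \<circ> \<sigma>) j)" using e i j by simp
  qed
  ultimately show ?thesis unfolding lgraph_iso_def using n by auto
qed

lemma graph_iso_cong:
  fixes U :: "'a::field mat"
  assumes U: "proj_rep_matrix k m U" and B: "B \<in> carrier_mat k k" and C: "C \<in> carrier_mat k k"
    and P: "P \<in> carrier_mat k k" and dP: "det P \<noteq> 0" and c: "c \<noteq> 0"
    and eq: "transpose_mat P * B * P = c \<cdot>\<^sub>m C"
  shows "lgraph_iso (looped_graph (transpose_mat U * C * U)) (looped_graph (transpose_mat U * B * U))"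
proof -
  have Uc: "U \<in> carrier_mat k m" using U unfolding proj_rep_matrix_def by auto
  define u where "u i = col U i" for i
  have uc: "i < m \<Longrightarrow> u i \<in> carrier_vec k" for i unfolding u_def using Uc by auto
  have u0: "i < m \<Longrightarrow> u i \<noteq> 0\<^sub>v k" for i unfolding u_def using U unfolding proj_rep_matrix_def by auto
  have pw: "i < m \<Longrightarrow> j < m \<Longrightarrow> i \<noteq> j \<Longrightarrow> \<not> (\<exists>c. u i = c \<cdot>\<^sub>v u j)" for i j
    unfolding u_def using U unfolding proj_rep_matrix_def by auto
  have cov: "v \<in> carrier_vec k \<Longrightarrow> v \<noteq> 0\<^sub>v k \<Longrightarrow> \<exists>j<m. \<exists>c. v = c \<cdot>\<^sub>v u j" for v
    unfolding u_def using U unfolding proj_rep_matrix_def by auto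
  have Pu: "i < m \<Longrightarrow> P *\<^sub>v u i \<in> carrier_vec k \<and> P *\<^sub>v u i \<noteq> 0\<^sub>v k" for i
    using det_kernel[OF P dP uc[of i]] u0[of i] P uc[of i] by auto
  define \<sigma> where "\<sigma> i = (SOME j. j < m \<and> (\<exists>c. P *\<^sub>v u i = c \<cdot>\<^sub>v u j))" for i
  have \<sigma>: "i < m \<Longrightarrow> \<sigma> i < m \<and> (\<exists>c. P *\<^sub>v u i = c \<cdot>\<^sub>v u (\<sigma> i))" for i
    unfolding \<sigma>_def by (rule someI_ex, insert cov Pu, blast)
  define l where "l i = (SOME c. P *\<^sub>v u i = c \<cdot>\<^sub>v u (\<sigma> i))" for i
  have l: "i < m \<Longrightarrow> P *\<^sub>v u i = l i \<cdot>\<^sub>v u (\<sigma> i)" for i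
    unfolding l_def by (rule someI_ex, insert \<sigma>, blast)
  have l0: "i < m \<Longrightarrow> l i \<noteq> 0" for i
  proof
    assume i: "i < m" and "l i = 0"
    hence "P *\<^sub>v u i = 0\<^sub>v k" using l[OF i] uc[OF conjunct1[OF \<sigma>[OF i]]] by auto
    with Pu[OF i] show False by simp
  qed
  have inj: "inj_on \<sigma> {..<m}"
  proof (rule inj_onI)
    fix i j assume i: "i \<in> {..<m}" and j: "j \<in> {..<m}" and s: "\<sigma> i = \<sigma> j"
    hence i: "i < m" and j: "j < m" by auto
    let ?r = "l i / l j"
    have "P *\<^sub>v u i = ?r \<cdot>\<^sub>v (l j \<cdot>\<^sub>v u (\<sigma> j))" using l[OF i] s l0[OF j]
      by (simp add: smult_smult_assoc)
    also have "\<dots> = ?r \<cdot>\<^sub>v (P *\<^sub>v u j)" using l[OF j] by simp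
    also have "\<dots> = P *\<^sub>v (?r \<cdot>\<^sub>v u j)" using mult_mat_vec[OF P uc[OF j]] by simp
    finally have "P *\<^sub>v (u i - ?r \<cdot>\<^sub>v u j) = 0\<^sub>v k"
      using P uc[OF i] uc[OF j] by (simp add: mult_minus_distrib_mat_vec)
    hence "u i - ?r \<cdot>\<^sub>v u j = 0\<^sub>v k" using det_kernel[OF P dP] uc[OF i] uc[OF j] by simp
    hence "u i = ?r \<cdot>\<^sub>v u j" by (rule vec_minus_zero[OF uc[OF i] smult_carrier_vec[THEN iffD2, OF uc[OF j]]])
    thus "i = j" using pw[OF i j] by blast
  qed
  have img: "\<sigma> ` {..<m} = {..<m}" by (rule endo_inj_surj[OF _ _ inj], insert \<sigma>, auto)
  have bij: "bij_betw \<sigma> {..<m} {..<m}" using inj img by (simp add: bij_betw_def)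
  have entry: "c * (transpose_mat U * C * U) $$ (i,j) = l i * l j * (transpose_mat U * B * U) $$ (\<sigma> i, \<sigma> j)"
    if i: "i < m" and j: "j < m" for i j
  proof -
    have si: "\<sigma> i < m" and sj: "\<sigma> j < m" using \<sigma> i j by auto
    have "c * (transpose_mat U * C * U) $$ (i,j) = c * (u i \<bullet> (C *\<^sub>v u j))"
      using entry_UMU[OF Uc C i j] unfolding u_def by simp
    also have "\<dots> = u i \<bullet> ((c \<cdot>\<^sub>m C) *\<^sub>v u j)"
      using smult_mat_vec[OF C uc[OF j]] uc[OF i] uc[OF j] C by simp
    also have "\<dots> = u i \<bullet> (transpose_mat P *\<^sub>v (B *\<^sub>v (P *\<^sub>v u j)))"
    proof -
      have PtB: "transpose_mat P * B \<in> carrier_mat k k" using P B by simp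
      have "(transpose_mat P * B * P) *\<^sub>v u j = (transpose_mat P * B) *\<^sub>v (P *\<^sub>v u j)"
        by (rule assoc_mult_mat_vec[OF PtB P uc[OF j]])
      also have "\<dots> = transpose_mat P *\<^sub>v (B *\<^sub>v (P *\<^sub>v u j))"
        by (rule assoc_mult_mat_vec, insert P B uc[OF j], auto)
      finally show ?thesis unfolding eq by simp
    qed
    also have "\<dots> = (P *\<^sub>v u i) \<bullet> (B *\<^sub>v (P *\<^sub>v u j))"
    proof -
      have w: "B *\<^sub>v (P *\<^sub>v u j) \<in> carrier_vec k" using B P uc[OF j] by simp
      have Pt: "transpose_mat P \<in> carrier_mat k k" using P by simp
      show ?thesis using transpose_vec_mult_scalar[OF Pt w uc[OF i]] by simp
    qed
    also have "\<dots> = (l i \<cdot>\<^sub>v u (\<sigma> i)) \<bullet> (B *\<^sub>v (l j \<cdot>\<^sub>v u (\<sigma> j)))" using l[OF i] l[OF j] by simp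
    also have "\<dots> = l i * l j * (u (\<sigma> i) \<bullet> (B *\<^sub>v u (\<sigma> j)))"
      using mult_mat_vec[OF B uc[OF sj]] uc[OF si] uc[OF sj] B by simp
    also have "\<dots> = l i * l j * (transpose_mat U * B * U) $$ (\<sigma> i, \<sigma> j)"
      using entry_UMU[OF Uc B si sj] unfolding u_def by simp
    finally show ?thesis .
  qed
  have dims: "dim_row (transpose_mat U * C * U) = m" "dim_row (transpose_mat U * B * U) = m"
    using Uc by auto
  show ?thesis unfolding lgraph_iso_def looped_graph_def fst_conv snd_conv dims
  proof (intro conjI exI[of _ \<sigma>] bij allI impI refl)
    fix i j assume i: "i < m" and j: "j < m"
    have "(transpose_mat U * C * U) $$ (i,j) \<noteq> 0 \<longleftrightarrow> c * (transpose_mat U * C * U) $$ (i,j) \<noteq> 0"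
      using c by simp
    also have "\<dots> \<longleftrightarrow> (transpose_mat U * B * U) $$ (\<sigma> i, \<sigma> j) \<noteq> 0"
      unfolding entry[OF i j] using l0[OF i] l0[OF j] by simp
    finally show "(transpose_mat U * C * U) $$ (i,j) \<noteq> 0 \<longleftrightarrow> (transpose_mat U * B * U) $$ (\<sigma> i, \<sigma> j) \<noteq> 0" .
  qed
qed




lemma sf_of_inv_sym:
  assumes "B \<in> inv_sym_mats k" shows "sf k (B :: 'a::{finite,field} mat)"
  using assms unfolding inv_sym_mats_def by (unfold_locales, auto simp: inv_det)

lemma realize_iso:
  fixes U :: "'a::{finite,field} mat"
  assumes U: "proj_rep_matrix k m U" and sfB: "sf k B" and C: "C \<in> carrier_mat k k" and dC: "det C \<noteq> 0"
    and r: "sf.realize k B C"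
  shows "lgraph_iso (looped_graph (transpose_mat U * B * U)) (looped_graph (transpose_mat U * C * U))"
proof -
  interpret sf k B by (rule sfB)
  obtain vs c where vs: "length vs = k" "set vs \<subseteq> carrier_vec k" "c \<noteq> 0" "gr vs (\<lambda>i j. c * C $$ (i,j))"
    using r unfolding realize_def by auto
  let ?P = "mat_of_cols k vs"
  have P: "?P \<in> carrier_mat k k" using vs(1) by (metis mat_of_cols_carrier(1))
  have g: "gram vs = c \<cdot>\<^sub>m C" unfolding gram_mat[OF vs(4)] vs(1) using C by (intro eq_matI, auto)
  have eq: "transpose_mat ?P * B * ?P = c \<cdot>\<^sub>m C" using gram_eq[OF vs(2)] g by simp
  have "det (gram vs) = c ^ k * det C" unfolding g using C by simp
  hence "det (gram vs) \<noteq> 0" using vs(3) dC by simp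
  hence dP: "det ?P \<noteq> 0" using det_gram_P[OF vs(2) vs(1)] by auto
  have "lgraph_iso (looped_graph (transpose_mat U * C * U)) (looped_graph (transpose_mat U * B * U))"
    by (rule graph_iso_cong[OF U B C P dP vs(3) eq])
  thus ?thesis by (rule lgraph_iso_sym)
qed

lemma main_cls:
  fixes U :: "'a::{finite,field} mat"
  assumes U: "proj_rep_matrix k m U" and sub: "Bs \<subseteq> inv_sym_mats k"
    and cls: "\<And>B. B \<in> inv_sym_mats k \<Longrightarrow> \<exists>C\<in>Bs. sf.realize k B C"
  shows "frak_g k U = iso_closure (graphs_of U Bs)"
proof
  show "frak_g k U \<subseteq> iso_closure (graphs_of U Bs)"
  proof
    fix G assume "G \<in> frak_g k U"
    then obtain B where B: "B \<in> inv_sym_mats k" and GB: "lgraph_iso G (looped_graph (transpose_mat U * B * U))"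
      unfolding frak_g_def iso_closure_def graphs_of_def by auto
    obtain C where C: "C \<in> Bs" "sf.realize k B C" using cls[OF B] by auto
    have Cc: "C \<in> carrier_mat k k" and dC: "det C \<noteq> 0" using sub C(1) unfolding inv_sym_mats_def
      by (auto simp: inv_det)
    have "lgraph_iso (looped_graph (transpose_mat U * B * U)) (looped_graph (transpose_mat U * C * U))"
      by (rule realize_iso[OF U sf_of_inv_sym[OF B] Cc dC C(2)])
    hence "lgraph_iso G (looped_graph (transpose_mat U * C * U))" by (rule lgraph_iso_trans[OF GB])
    thus "G \<in> iso_closure (graphs_of U Bs)" unfolding iso_closure_def graphs_of_def using C(1) by auto
  qed
next
  show "iso_closure (graphs_of U Bs) \<subseteq> frak_g k U"
    unfolding frak_g_def iso_closure_def graphs_of_def using sub by blast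
qed

lemma one_inv_sym: "(1\<^sub>m k :: 'a::field mat) \<in> inv_sym_mats k"
  unfolding inv_sym_mats_def using inv_det[OF one_carrier_mat, of k] by auto

lemma diagH_inv_sym: assumes "even k" shows "(diagH k :: 'a::field mat) \<in> inv_sym_mats k"
proof -
  have "transpose_mat (diagH k :: 'a mat) = diagH k" unfolding diagH_def by (intro eq_matI, auto)
  moreover have Hc: "(diagH k :: 'a mat) \<in> carrier_mat k k" unfolding diagH_def by simp
  ultimately show ?thesis unfolding inv_sym_mats_def using det_diagH[OF assms] inv_det[OF Hc]
    by auto
qed

lemma diag_nu_inv_sym: assumes "k \<ge> 1" "\<nu> \<noteq> 0" shows "(diag_nu k \<nu> :: 'a::field mat) \<in> inv_sym_mats k"
proof -
  have "transpose_mat (diag_nu k \<nu> :: 'a mat) = diag_nu k \<nu>" unfolding diag_nu_def by (intro eq_matI, auto)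
  moreover have "det (diag_nu k \<nu>) = 1 ^ (k - 1) * \<nu>"
    unfolding diag_nu_def using det_diag[of k "\<lambda>i. if i = k - 1 then \<nu> else 1"] prod_last[OF assms(1), of \<nu> 1]
    by simp
  moreover have Nc: "(diag_nu k \<nu> :: 'a mat) \<in> carrier_mat k k" unfolding diag_nu_def by simp
  ultimately show ?thesis unfolding inv_sym_mats_def using assms inv_det[OF Nc]
    by auto
qed

theorem mainTheorem2:
  fixes U :: "'a::{finite, field} mat" and k m :: nat
  assumes "k \<ge> 1"
    and "proj_rep_matrix k m U"
  shows "(odd k \<longrightarrow> frak_g k U = iso_closure (graphs_of U {1\<^sub>m k}))
       \<and> (even k \<and> even (card (UNIV :: 'a set)) \<longrightarrow>
            frak_g k U = iso_closure (graphs_of U {1\<^sub>m k, diagH k}))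
       \<and> (\<forall>\<nu>::'a. even k \<and> odd (card (UNIV :: 'a set)) \<and> \<not> (\<exists>x. \<nu> = x * x) \<longrightarrow>
            frak_g k U = iso_closure (graphs_of U {1\<^sub>m k, diag_nu k \<nu>}))"
proof (intro conjI impI allI)
  assume odd: "odd k"
  show "frak_g k U = iso_closure (graphs_of U {1\<^sub>m k})"
  proof (rule main_cls[OF assms(2)])
    show "{1\<^sub>m k} \<subseteq> inv_sym_mats k" using one_inv_sym by auto
  next
    fix B :: "'a mat" assume B: "B \<in> inv_sym_mats k"
    interpret sf k B by (rule sf_of_inv_sym[OF B])
    have "realize (1\<^sub>m k)"
    proof (cases "(1::'a) + 1 = 0")
      case True thus ?thesis using c2_classify[OF True assms(1)] odd by auto
    next
      case False thus ?thesis using cn2_classify[OF False assms(1)] odd by auto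
    qed
    thus "\<exists>C\<in>{1\<^sub>m k}. realize C" by auto
  qed
next
  assume a: "even k \<and> even (card (UNIV :: 'a set))"
  have e2: "(1::'a) + 1 = 0" using char2_of_even a by auto
  show "frak_g k U = iso_closure (graphs_of U {1\<^sub>m k, diagH k})"
  proof (rule main_cls[OF assms(2)])
    show "{1\<^sub>m k, diagH k} \<subseteq> inv_sym_mats k" using one_inv_sym diagH_inv_sym a by auto
  next
    fix B :: "'a mat" assume B: "B \<in> inv_sym_mats k"
    interpret sf k B by (rule sf_of_inv_sym[OF B])
    show "\<exists>C\<in>{1\<^sub>m k, diagH k}. realize C" using c2_classify[OF e2 assms(1)] a by auto
  qed
next
  fix \<nu> :: 'a
  assume a: "even k \<and> odd (card (UNIV :: 'a set)) \<and> \<not> (\<exists>x. \<nu> = x * x)"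
  have ne: "(1::'a) + 1 \<noteq> 0" using char_ne2_of_odd a by auto
  have nu0: "\<nu> \<noteq> 0" using a by auto
  show "frak_g k U = iso_closure (graphs_of U {1\<^sub>m k, diag_nu k \<nu>})"
  proof (rule main_cls[OF assms(2)])
    show "{1\<^sub>m k, diag_nu k \<nu>} \<subseteq> inv_sym_mats k" using one_inv_sym diag_nu_inv_sym[OF assms(1) nu0] by auto
  next
    fix B :: "'a mat" assume B: "B \<in> inv_sym_mats k"
    interpret sf k B by (rule sf_of_inv_sym[OF B])
    show "\<exists>C\<in>{1\<^sub>m k, diag_nu k \<nu>}. realize C" using cn2_classify[OF ne assms(1)] a by auto
  qed
qed


end
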